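(* Let $Q$ be a loop. (i) If $N(Q)$ is a normal subloop of $Q$, then $Q/N(Q)$ is an abelian group if and only if for all $x,y,z,u,v\in Q$: $[[x,y,z],u,v]=[u,[x,y,z],v]=[u,v,[x,y,z]]=1$ and $[[x,y],z,u]=[z,[x,y],u]=[z,u,[x,y]]=1$. (ii) $Q/Z(Q)$ is a group if and only if for all $x,y,z,u,v\in Q$: $[[x,y,z],u,v]=[u,[x,y,z],v]=[u,v,[x,y,z]]=1$ and $[[x,y,z],u]=1$.
   Context: A loop $(Q,\cdot)$ is a set with a binary operation and an identity $1$ such that all left translations $L_x:y\mapsto xy$ and right translations $R_x:y\mapsto yx$ are bijections; $x\backslash y=yL_x^{-1}$. The associator is $[x,y,z]=(x\cdot yz)\backslash(xy\cdot z)$ and the commutator is $[x,y]=(yx)\backslash(xy)$ (juxtaposition denotes multiplication, e.g. $x\cdot yz=x\cdot(y\cdot z)$). $\mathrm{Inn}(Q)$ is the set of elements of $\langle L_x,R_x:x\in Q\rangle$ fixing $1$; a subloop $S$ (nonempty subset closed under multiplication and both divisions) is normal if $S\varphi=S$ for all $\varphi\in\mathrm{Inn}(Q)$, and then $Q/S$ is the loop of cosets $xS$ with $xS\cdot yS=(xy)S$. The nucleus is $N(Q)=\{a\in Q: ax\cdot y=a\cdot xy,\ xy\cdot a=x\cdot ya,\ xa\cdot y=x\cdot ay\ \forall x,y\in Q\}$, the commutant is $C(Q)=\{a: ax=xa\ \forall x\}$, and the center is $Z(Q)=C(Q)\cap N(Q)$, which is always a normal subloop. *)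

theory Defs
  imports "HOL-Algebra.Group" "HOL-Library.FuncSet"
begin

definition loop :: "'a set \<Rightarrow> ('a \<Rightarrow> 'a \<Rightarrow> 'a) \<Rightarrow> 'a \<Rightarrow> bool" where
  "loop Q m e \<longleftrightarrow> e \<in> Q \<and> (\<forall>x\<in>Q. \<forall>y\<in>Q. m x y \<in> Q)
     \<and> (\<forall>x\<in>Q. m e x = x \<and> m x e = x)
     \<and> (\<forall>x\<in>Q. bij_betw (m x) Q Q)
     \<and> (\<forall>x\<in>Q. bij_betw (\<lambda>y. m y x) Q Q)"

definition Ltr :: "'a set \<Rightarrow> ('a \<Rightarrow> 'a \<Rightarrow> 'a) \<Rightarrow> 'a \<Rightarrow> ('a \<Rightarrow> 'a)" where
  "Ltr Q m x = restrict (\<lambda>y. m x y) Q"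

definition Rtr :: "'a set \<Rightarrow> ('a \<Rightarrow> 'a \<Rightarrow> 'a) \<Rightarrow> 'a \<Rightarrow> ('a \<Rightarrow> 'a)" where
  "Rtr Q m x = restrict (\<lambda>y. m y x) Q"

definition ldiv :: "'a set \<Rightarrow> ('a \<Rightarrow> 'a \<Rightarrow> 'a) \<Rightarrow> 'a \<Rightarrow> 'a \<Rightarrow> 'a" where
  "ldiv Q m x y = (THE z. z \<in> Q \<and> m x z = y)"

definition rdiv :: "'a set \<Rightarrow> ('a \<Rightarrow> 'a \<Rightarrow> 'a) \<Rightarrow> 'a \<Rightarrow> 'a \<Rightarrow> 'a" where
  "rdiv Q m y x = (THE z. z \<in> Q \<and> m z x = y)"

definition assoc :: "'a set \<Rightarrow> ('a \<Rightarrow> 'a \<Rightarrow> 'a) \<Rightarrow> 'a \<Rightarrow> 'a \<Rightarrow> 'a \<Rightarrow> 'a" where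
  "assoc Q m x y z = ldiv Q m (m x (m y z)) (m (m x y) z)"

definition comm :: "'a set \<Rightarrow> ('a \<Rightarrow> 'a \<Rightarrow> 'a) \<Rightarrow> 'a \<Rightarrow> 'a \<Rightarrow> 'a" where
  "comm Q m x y = ldiv Q m (m y x) (m x y)"

inductive_set Mlt :: "'a set \<Rightarrow> ('a \<Rightarrow> 'a \<Rightarrow> 'a) \<Rightarrow> ('a \<Rightarrow> 'a) set"
  for Q m where
  Mlt_id: "restrict id Q \<in> Mlt Q m"
| Mlt_L: "x \<in> Q \<Longrightarrow> Ltr Q m x \<in> Mlt Q m"
| Mlt_R: "x \<in> Q \<Longrightarrow> Rtr Q m x \<in> Mlt Q m"
| Mlt_comp: "f \<in> Mlt Q m \<Longrightarrow> g \<in> Mlt Q m \<Longrightarrow> compose Q g f \<in> Mlt Q m"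
| Mlt_inv: "f \<in> Mlt Q m \<Longrightarrow> restrict (inv_into Q f) Q \<in> Mlt Q m"

definition Inn :: "'a set \<Rightarrow> ('a \<Rightarrow> 'a \<Rightarrow> 'a) \<Rightarrow> 'a \<Rightarrow> ('a \<Rightarrow> 'a) set" where
  "Inn Q m e = {\<phi> \<in> Mlt Q m. \<phi> e = e}"

definition subloop :: "'a set \<Rightarrow> ('a \<Rightarrow> 'a \<Rightarrow> 'a) \<Rightarrow> 'a set \<Rightarrow> bool" where
  "subloop Q m S \<longleftrightarrow> S \<subseteq> Q \<and> S \<noteq> {}
     \<and> (\<forall>x\<in>S. \<forall>y\<in>S. m x y \<in> S \<and> ldiv Q m x y \<in> S \<and> rdiv Q m x y \<in> S)"

definition normal_subloop :: "'a set \<Rightarrow> ('a \<Rightarrow> 'a \<Rightarrow> 'a) \<Rightarrow> 'a \<Rightarrow> 'a set \<Rightarrow> bool" where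
  "normal_subloop Q m e S \<longleftrightarrow> subloop Q m S \<and> (\<forall>\<phi>\<in>Inn Q m e. \<phi> ` S = S)"

definition nucleus :: "'a set \<Rightarrow> ('a \<Rightarrow> 'a \<Rightarrow> 'a) \<Rightarrow> 'a set" where
  "nucleus Q m = {a \<in> Q. \<forall>x\<in>Q. \<forall>y\<in>Q.
      m (m a x) y = m a (m x y) \<and> m (m x y) a = m x (m y a) \<and> m (m x a) y = m x (m a y)}"

definition commutant :: "'a set \<Rightarrow> ('a \<Rightarrow> 'a \<Rightarrow> 'a) \<Rightarrow> 'a set" where
  "commutant Q m = {a \<in> Q. \<forall>x\<in>Q. m a x = m x a}"

definition center :: "'a set \<Rightarrow> ('a \<Rightarrow> 'a \<Rightarrow> 'a) \<Rightarrow> 'a set" where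
  "center Q m = commutant Q m \<inter> nucleus Q m"

definition lcoset :: "('a \<Rightarrow> 'a \<Rightarrow> 'a) \<Rightarrow> 'a \<Rightarrow> 'a set \<Rightarrow> 'a set" where
  "lcoset m x S = {m x s | s. s \<in> S}"

definition quot_loop :: "'a set \<Rightarrow> ('a \<Rightarrow> 'a \<Rightarrow> 'a) \<Rightarrow> 'a set \<Rightarrow> 'a set monoid" where
  "quot_loop Q m S = \<lparr> carrier = {lcoset m x S | x. x \<in> Q},
      mult = (\<lambda>A B. lcoset m (m (SOME a. a \<in> A) (SOME b. b \<in> B)) S),
      one = S \<rparr>"

end

theory Submission
  imports Defs
begin

locale lp =
  fixes Q :: "'a set" and m :: "'a \<Rightarrow> 'a \<Rightarrow> 'a" and e :: 'a
  assumes L: "loop Q m e"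
begin

lemma e_in[simp]: "e \<in> Q" using L unfolding loop_def by blast
lemma cl[simp]: "x \<in> Q \<Longrightarrow> y \<in> Q \<Longrightarrow> m x y \<in> Q" using L unfolding loop_def by blast
lemma lid[simp]: "x \<in> Q \<Longrightarrow> m e x = x" using L unfolding loop_def by blast
lemma rid[simp]: "x \<in> Q \<Longrightarrow> m x e = x" using L unfolding loop_def by blast
lemma bijL: "x \<in> Q \<Longrightarrow> bij_betw (m x) Q Q" using L unfolding loop_def by blast
lemma bijR: "x \<in> Q \<Longrightarrow> bij_betw (\<lambda>y. m y x) Q Q" using L unfolding loop_def by blast

lemma lcanc: "x \<in> Q \<Longrightarrow> y \<in> Q \<Longrightarrow> z \<in> Q \<Longrightarrow> m x y = m x z \<Longrightarrow> y = z"
  using bijL[of x] unfolding bij_betw_def inj_on_def by blast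
lemma rcanc: "x \<in> Q \<Longrightarrow> y \<in> Q \<Longrightarrow> z \<in> Q \<Longrightarrow> m y x = m z x \<Longrightarrow> y = z"
  using bijR[of x] unfolding bij_betw_def inj_on_def by blast

lemma lex: "x \<in> Q \<Longrightarrow> y \<in> Q \<Longrightarrow> \<exists>z\<in>Q. m x z = y"
  using bijL[of x] unfolding bij_betw_def by (metis imageE)
lemma rex: "x \<in> Q \<Longrightarrow> y \<in> Q \<Longrightarrow> \<exists>z\<in>Q. m z x = y"
  using bijR[of x] unfolding bij_betw_def by (metis (no_types, lifting) imageE)

lemma ldiv_unique: "x \<in> Q \<Longrightarrow> z \<in> Q \<Longrightarrow> m x z = y \<Longrightarrow> ldiv Q m x y = z"
  unfolding ldiv_def by (rule the_equality) (auto intro: lcanc)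
lemma ldiv_prop: "x \<in> Q \<Longrightarrow> y \<in> Q \<Longrightarrow> ldiv Q m x y \<in> Q \<and> m x (ldiv Q m x y) = y"
  using lex[of x y] ldiv_unique by metis
lemma rdiv_unique: "x \<in> Q \<Longrightarrow> z \<in> Q \<Longrightarrow> m z x = y \<Longrightarrow> rdiv Q m y x = z"
  unfolding rdiv_def by (rule the_equality) (auto intro: rcanc)
lemma rdiv_prop: "x \<in> Q \<Longrightarrow> y \<in> Q \<Longrightarrow> rdiv Q m y x \<in> Q \<and> m (rdiv Q m y x) x = y"
  using rex[of x y] rdiv_unique by metis

lemma ldiv_e: "x \<in> Q \<Longrightarrow> y \<in> Q \<Longrightarrow> ldiv Q m x y = e \<longleftrightarrow> y = x"
  using ldiv_prop[of x y] ldiv_unique[of x e y] by (auto, metis rid)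

lemma assoc_in: "x \<in> Q \<Longrightarrow> y \<in> Q \<Longrightarrow> z \<in> Q \<Longrightarrow> assoc Q m x y z \<in> Q"
  unfolding assoc_def using ldiv_prop by simp
lemma comm_in: "x \<in> Q \<Longrightarrow> y \<in> Q \<Longrightarrow> comm Q m x y \<in> Q"
  unfolding comm_def using ldiv_prop by simp
lemma assoc_e: "x \<in> Q \<Longrightarrow> y \<in> Q \<Longrightarrow> z \<in> Q \<Longrightarrow> assoc Q m x y z = e \<longleftrightarrow> m (m x y) z = m x (m y z)"
  unfolding assoc_def by (simp add: ldiv_e)
lemma comm_e: "x \<in> Q \<Longrightarrow> y \<in> Q \<Longrightarrow> comm Q m x y = e \<longleftrightarrow> m x y = m y x"
  unfolding comm_def by (simp add: ldiv_e)

lemma nuc_iff: "a \<in> Q \<Longrightarrow> a \<in> nucleus Q m \<longleftrightarrow>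
   (\<forall>u\<in>Q. \<forall>v\<in>Q. assoc Q m a u v = e \<and> assoc Q m u a v = e \<and> assoc Q m u v a = e)"
  unfolding nucleus_def by (auto simp: assoc_e)

lemma cen_iff: "a \<in> Q \<Longrightarrow> a \<in> center Q m \<longleftrightarrow>
   (\<forall>u\<in>Q. \<forall>v\<in>Q. assoc Q m a u v = e \<and> assoc Q m u a v = e \<and> assoc Q m u v a = e)
   \<and> (\<forall>u\<in>Q. comm Q m a u = e)"
  unfolding center_def commutant_def using nuc_iff by (auto simp: comm_e)

lemma nucD:
  assumes "a \<in> nucleus Q m" "x \<in> Q" "y \<in> Q"
  shows "a \<in> Q" "m (m a x) y = m a (m x y)" "m (m x y) a = m x (m y a)" "m (m x a) y = m x (m a y)"
  using assms unfolding nucleus_def by auto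

lemma nucQ: "a \<in> nucleus Q m \<Longrightarrow> a \<in> Q" unfolding nucleus_def by auto

lemma e_nuc: "e \<in> nucleus Q m" unfolding nucleus_def by auto

lemma nuc_mult: assumes a: "a \<in> nucleus Q m" and b: "b \<in> nucleus Q m"
  shows "m a b \<in> nucleus Q m"
proof -
  have aQ: "a \<in> Q" and bQ: "b \<in> Q" using nucQ a b by auto
  show ?thesis unfolding nucleus_def
  proof (intro CollectI conjI ballI)
    fix x y assume x: "x \<in> Q" and y: "y \<in> Q"
    show "m (m (m a b) x) y = m (m a b) (m x y)"
      using nucD[OF a] nucD[OF b] aQ bQ x y by simp
    have "m (m x y) (m a b) = m (m (m x y) a) b" using nucD(3)[OF b, of "m x y" a] x y aQ by simp
    also have "\<dots> = m (m x (m y a)) b" using nucD(3)[OF a x y] by simp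
    also have "\<dots> = m x (m (m y a) b)" using nucD(3)[OF b, of x "m y a"] x y aQ by simp
    also have "\<dots> = m x (m y (m a b))" using nucD(3)[OF b y aQ] by simp
    finally show "m (m x y) (m a b) = m x (m y (m a b))" .
    have "m (m x (m a b)) y = m (m (m x a) b) y" using nucD(3)[OF b x aQ] by simp
    also have "\<dots> = m (m x a) (m b y)" using nucD(4)[OF b, of "m x a" y] x y aQ by simp
    also have "\<dots> = m x (m a (m b y))" using nucD(4)[OF a, of x "m b y"] x y bQ by simp
    also have "\<dots> = m x (m (m a b) y)" using nucD(2)[OF a bQ y] by simp
    finally show "m (m x (m a b)) y = m x (m (m a b) y)" .
  qed (use aQ bQ in simp)
qed

lemma nuc_inv: assumes a: "a \<in> nucleus Q m"
  obtains a' where "a' \<in> nucleus Q m" "m a a' = e" "m a' a = e"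
proof -
  have aQ: "a \<in> Q" using nucQ a by auto
  obtain a' where a'Q: "a' \<in> Q" and aa': "m a a' = e" using lex[OF aQ e_in] by blast
  have a'a: "m a' a = e"
  proof -
    have "m a (m a' a) = m a e" using nucD(2)[OF a a'Q aQ] aa' aQ by simp
    then show ?thesis using lcanc aQ a'Q by (metis cl e_in)
  qed
  have "a' \<in> nucleus Q m" unfolding nucleus_def
  proof (intro CollectI conjI ballI)
    fix x y assume x: "x \<in> Q" and y: "y \<in> Q"
    show "m (m a' x) y = m a' (m x y)"
    proof (rule lcanc[OF aQ])
      show "m a (m (m a' x) y) = m a (m a' (m x y))"
        using nucD[OF a] a'Q x y aa' by (metis cl lid)
    qed (use a'Q x y in auto)
    show "m (m x y) a' = m x (m y a')"
    proof (rule rcanc[OF aQ])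
      show "m (m (m x y) a') a = m (m x (m y a')) a"
        using nucD[OF a] a'Q x y a'a by (metis cl rid)
    qed (use a'Q x y in auto)
    show "m (m x a') y = m x (m a' y)"
    proof -
      define w where "w = m a' y"
      have wQ: "w \<in> Q" using w_def a'Q y by simp
      have yw: "y = m a w" unfolding w_def using nucD[OF a] a'Q y aa' by (metis lid)
      have "m (m x a') y = m (m (m x a') a) w" using yw nucD(4)[OF a, of "m x a'" w] x a'Q wQ by simp
      also have "\<dots> = m x w" using nucD(3)[OF a x a'Q] a'a x by simp
      finally show ?thesis unfolding w_def .
    qed
  qed (use a'Q in simp)
  then show ?thesis using that aa' a'a by blast
qed

lemma nuc_ldiv: assumes a: "a \<in> nucleus Q m" and b: "b \<in> nucleus Q m"
  shows "ldiv Q m a b \<in> nucleus Q m"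
proof -
  obtain a' where a': "a' \<in> nucleus Q m" "m a a' = e" "m a' a = e" using nuc_inv a by blast
  have Q: "a \<in> Q" "b \<in> Q" "a' \<in> Q" using nucQ a b a' by auto
  have "ldiv Q m a b = m a' b"
    apply (rule ldiv_unique)
    using nucD(2)[OF a Q(3) Q(2)] Q a' by auto
  then show ?thesis using nuc_mult a' b by simp
qed

lemma nuc_rdiv: assumes a: "a \<in> nucleus Q m" and b: "b \<in> nucleus Q m"
  shows "rdiv Q m b a \<in> nucleus Q m"
proof -
  obtain a' where a': "a' \<in> nucleus Q m" "m a a' = e" "m a' a = e" using nuc_inv a by blast
  have Q: "a \<in> Q" "b \<in> Q" "a' \<in> Q" using nucQ a b a' by auto
  have "rdiv Q m b a = m b a'"
    apply (rule rdiv_unique)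
    using nucD(3)[OF a Q(2) Q(3)] Q a' by auto
  then show ?thesis using nuc_mult a' b by simp
qed

end
locale qc = lp +
  fixes S :: "'a set"
  assumes Snuc: "S \<subseteq> nucleus Q m"
    and eS: "e \<in> S"
    and Smult: "s \<in> S \<Longrightarrow> t \<in> S \<Longrightarrow> m s t \<in> S"
    and Sldiv: "s \<in> S \<Longrightarrow> t \<in> S \<Longrightarrow> ldiv Q m s t \<in> S"
    and Snorm: "s \<in> S \<Longrightarrow> y \<in> Q \<Longrightarrow> \<exists>s'\<in>S. m s y = m y s'"
begin

abbreviation cls where "cls x \<equiv> lcoset m x S"
abbreviation G where "G \<equiv> quot_loop Q m S"

lemma SQ: "s \<in> S \<Longrightarrow> s \<in> Q" using Snuc nucQ by blast
lemma SN: "s \<in> S \<Longrightarrow> s \<in> nucleus Q m" using Snuc by blast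

lemma cls_mem: "x \<in> Q \<Longrightarrow> x \<in> cls x"
  unfolding lcoset_def using eS by (auto intro!: exI[of _ e])

lemma cls_sub: "x \<in> Q \<Longrightarrow> cls x \<subseteq> Q"
  unfolding lcoset_def using SQ by auto

lemma cls_eq: assumes x: "x \<in> Q" and a: "a \<in> cls x" shows "cls a = cls x"
proof -
  obtain s where s: "s \<in> S" and as: "a = m x s" using a unfolding lcoset_def by blast
  show ?thesis
  proof
    show "cls a \<subseteq> cls x"
    proof
      fix b assume "b \<in> cls a"
      then obtain t where t: "t \<in> S" "b = m a t" unfolding lcoset_def by blast
      have "b = m x (m s t)" using t as nucD(4)[OF SN[OF s] x SQ[OF t(1)]] by simp
      then show "b \<in> cls x" unfolding lcoset_def using Smult s t by blast
    qed
    show "cls x \<subseteq> cls a"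
    proof
      fix b assume "b \<in> cls x"
      then obtain t where t: "t \<in> S" "b = m x t" unfolding lcoset_def by blast
      define r where "r = ldiv Q m s t"
      have r: "r \<in> S" "m s r = t" unfolding r_def using Sldiv s t ldiv_prop SQ by auto
      have "b = m a r" using t as r nucD(4)[OF SN[OF s] x SQ[OF r(1)]] by simp
      then show "b \<in> cls a" unfolding lcoset_def using r by blast
    qed
  qed
qed

lemma cls_mult: assumes x: "x \<in> Q" and y: "y \<in> Q" and a: "a \<in> cls x" and b: "b \<in> cls y"
  shows "m a b \<in> cls (m x y)"
proof -
  obtain s where s: "s \<in> S" and as: "a = m x s" using a unfolding lcoset_def by blast
  obtain t where t: "t \<in> S" and bt: "b = m y t" using b unfolding lcoset_def by blast
  obtain s' where s': "s' \<in> S" "m s y = m y s'" using Snorm s y by blast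
  note Q = SQ[OF s] SQ[OF t] SQ[OF s'(1)]
  have "m a b = m (m (m x s) y) t" using as bt nucD(3)[OF SN[OF t], of "m x s" y] x y Q by simp
  also have "\<dots> = m (m x (m y s')) t" using nucD(4)[OF SN[OF s] x y] s' by simp
  also have "\<dots> = m (m (m x y) s') t" using nucD(3)[OF SN[OF s'(1)] x y] by simp
  also have "\<dots> = m (m x y) (m s' t)" using nucD(4)[OF SN[OF s'(1)], of "m x y" t] x y Q by simp
  finally show ?thesis unfolding lcoset_def using Smult s' t by blast
qed

lemma carrierG: "carrier G = cls ` Q" unfolding quot_loop_def by auto
lemma oneG: "one G = cls e"
proof -
  have "cls e = S" unfolding lcoset_def using SQ by (auto, metis lid SQ)
  then show ?thesis unfolding quot_loop_def by simp
qed

lemma multG: assumes x: "x \<in> Q" and y: "y \<in> Q" shows "mult G (cls x) (cls y) = cls (m x y)"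
proof -
  let ?a = "SOME a. a \<in> cls x" and ?b = "SOME b. b \<in> cls y"
  have a: "?a \<in> cls x" using cls_mem[OF x] by (rule someI)
  have b: "?b \<in> cls y" using cls_mem[OF y] by (rule someI)
  have "mult G (cls x) (cls y) = cls (m ?a ?b)" unfolding quot_loop_def by simp
  also have "\<dots> = cls (m x y)" by (rule cls_eq[OF cl[OF x y] cls_mult[OF x y a b]])
  finally show ?thesis .
qed

lemma cls_eq_iff: assumes x: "x \<in> Q" and y: "y \<in> Q"
  shows "cls x = cls y \<longleftrightarrow> (\<exists>s\<in>S. x = m y s)"
proof
  assume "cls x = cls y" then have "x \<in> cls y" using cls_mem x by auto
  then show "\<exists>s\<in>S. x = m y s" unfolding lcoset_def by blast
next
  assume "\<exists>s\<in>S. x = m y s"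
  then have "x \<in> cls y" unfolding lcoset_def by blast
  then show "cls x = cls y" using cls_eq y by blast
qed

lemma ldiv_in_S: assumes x: "x \<in> Q" and y: "y \<in> Q"
  shows "ldiv Q m y x \<in> S \<longleftrightarrow> cls x = cls y"
proof -
  have "ldiv Q m y x \<in> S \<longleftrightarrow> (\<exists>s\<in>S. x = m y s)"
    using ldiv_prop[OF y x] ldiv_unique[OF y SQ] by (metis)
  then show ?thesis using cls_eq_iff[OF x y] by simp
qed

lemma assoc_S: "x \<in> Q \<Longrightarrow> y \<in> Q \<Longrightarrow> z \<in> Q \<Longrightarrow>
   assoc Q m x y z \<in> S \<longleftrightarrow> cls (m (m x y) z) = cls (m x (m y z))"
  unfolding assoc_def by (rule ldiv_in_S) auto

lemma comm_S: "x \<in> Q \<Longrightarrow> y \<in> Q \<Longrightarrow>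
   comm Q m x y \<in> S \<longleftrightarrow> cls (m x y) = cls (m y x)"
  unfolding comm_def by (rule ldiv_in_S) auto

lemma group_iff: "group G \<longleftrightarrow> (\<forall>x\<in>Q. \<forall>y\<in>Q. \<forall>z\<in>Q. assoc Q m x y z \<in> S)"
proof
  assume g: "group G"
  show "\<forall>x\<in>Q. \<forall>y\<in>Q. \<forall>z\<in>Q. assoc Q m x y z \<in> S"
  proof (intro ballI)
    fix x y z assume xyz: "x \<in> Q" "y \<in> Q" "z \<in> Q"
    have "mult G (mult G (cls x) (cls y)) (cls z) = mult G (cls x) (mult G (cls y) (cls z))"
      using group.axioms(1)[OF g] monoid.m_assoc carrierG xyz by (metis image_eqI)
    then show "assoc Q m x y z \<in> S" using assoc_S xyz multG by simp
  qed
next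
  assume A: "\<forall>x\<in>Q. \<forall>y\<in>Q. \<forall>z\<in>Q. assoc Q m x y z \<in> S"
  show "group G"
  proof (rule groupI)
    fix a b assume "a \<in> carrier G" "b \<in> carrier G"
    then show "mult G a b \<in> carrier G" using carrierG multG by auto
  next
    show "one G \<in> carrier G" using carrierG oneG by auto
  next
    fix a b c assume "a \<in> carrier G" "b \<in> carrier G" "c \<in> carrier G"
    then obtain x y z where "x \<in> Q" "y \<in> Q" "z \<in> Q" "a = cls x" "b = cls y" "c = cls z"
      using carrierG by auto
    then show "mult G (mult G a b) c = mult G a (mult G b c)"
      using multG A assoc_S by simp
  next
    fix a assume "a \<in> carrier G"
    then obtain x where "x \<in> Q" "a = cls x" using carrierG by auto
    then show "mult G (one G) a = a" using multG oneG by simp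
  next
    fix a assume "a \<in> carrier G"
    then obtain x where x: "x \<in> Q" "a = cls x" using carrierG by auto
    define y where "y = rdiv Q m e x"
    have y: "y \<in> Q" "m y x = e" unfolding y_def using rdiv_prop x by auto
    then show "\<exists>b\<in>carrier G. mult G b a = one G"
      using x multG oneG carrierG by (metis image_eqI)
  qed
qed

lemma comm_group_iff: "comm_group G \<longleftrightarrow> group G \<and> (\<forall>x\<in>Q. \<forall>y\<in>Q. comm Q m x y \<in> S)"
proof
  assume g: "comm_group G"
  then have "group G" by (simp add: comm_group_def)
  moreover have "\<forall>x\<in>Q. \<forall>y\<in>Q. comm Q m x y \<in> S"
  proof (intro ballI)
    fix x y assume xy: "x \<in> Q" "y \<in> Q"
    have "mult G (cls x) (cls y) = mult G (cls y) (cls x)"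
      using comm_group.axioms(1)[OF g] comm_monoid.m_comm carrierG xy by (metis image_eqI)
    then show "comm Q m x y \<in> S" using comm_S xy multG by simp
  qed
  ultimately show "group G \<and> (\<forall>x\<in>Q. \<forall>y\<in>Q. comm Q m x y \<in> S)" by blast
next
  assume A: "group G \<and> (\<forall>x\<in>Q. \<forall>y\<in>Q. comm Q m x y \<in> S)"
  show "comm_group G"
  proof (rule group.group_comm_groupI)
    show "group G" using A by blast
    fix a b assume "a \<in> carrier G" "b \<in> carrier G"
    then obtain x y where "x \<in> Q" "y \<in> Q" "a = cls x" "b = cls y" using carrierG by auto
    then show "mult G a b = mult G b a" using A multG comm_S by simp
  qed
qed

end
context lp begin

lemma cenD: "a \<in> center Q m \<Longrightarrow> a \<in> nucleus Q m \<and> (\<forall>x\<in>Q. m a x = m x a)"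
  unfolding center_def commutant_def by auto

lemma qc_center: "qc Q m e (center Q m)"
proof (unfold_locales)
  show "center Q m \<subseteq> nucleus Q m" unfolding center_def by auto
  show "e \<in> center Q m" unfolding center_def commutant_def using e_nuc by auto
next
  fix s t assume s: "s \<in> center Q m" and t: "t \<in> center Q m"
  note sn = cenD[OF s] and tn = cenD[OF t]
  have sQ: "s \<in> Q" and tQ: "t \<in> Q" using sn tn nucQ by auto
  show "m s t \<in> center Q m" unfolding center_def commutant_def
  proof (intro IntI CollectI conjI ballI)
    show "m s t \<in> nucleus Q m" using nuc_mult sn tn by auto
    fix x assume x: "x \<in> Q"
    have "m (m s t) x = m s (m t x)" using nucD(2)[of s t x] sn sQ tQ x by auto
    also have "\<dots> = m s (m x t)" using tn x by metis
    also have "\<dots> = m (m s x) t" using nucD(2)[OF sn[THEN conjunct1] x tQ] by simp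
    also have "\<dots> = m (m x s) t" using sn x by metis
    also have "\<dots> = m x (m s t)" using nucD(3)[OF tn[THEN conjunct1] x sQ] by simp
    finally show "m (m s t) x = m x (m s t)" .
  qed (use sQ tQ in auto)
  define c where "c = ldiv Q m s t"
  have c: "c \<in> nucleus Q m" "c \<in> Q" "m s c = t" unfolding c_def using nuc_ldiv sn tn ldiv_prop sQ tQ nucQ by auto
  show "ldiv Q m s t \<in> center Q m" unfolding c_def[symmetric] center_def commutant_def
  proof (intro IntI CollectI conjI ballI)
    fix x assume x: "x \<in> Q"
    have "m s (m c x) = m (m s c) x" using nucD(2)[of s c x] sn c x by auto
    also have "\<dots> = m x t" using c tn x by metis
    also have "\<dots> = m (m x s) c" using nucD(3)[of c x s] c x sQ by auto
    also have "\<dots> = m (m s x) c" using sn x by metis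
    also have "\<dots> = m s (m x c)" using nucD(2)[of s x c] sn c x by auto
    finally show "m c x = m x c" using lcanc[OF sQ] c x by auto
  qed (use c in auto)
next
  fix s y assume "s \<in> center Q m" "y \<in> Q"
  then show "\<exists>s'\<in>center Q m. m s y = m y s'" using cenD by blast
qed

lemma qc_nucleus: assumes N: "normal_subloop Q m e (nucleus Q m)"
  shows "qc Q m e (nucleus Q m)"
proof (unfold_locales)
  show "e \<in> nucleus Q m" by (rule e_nuc)
next
  fix s t assume "s \<in> nucleus Q m" "t \<in> nucleus Q m"
  then show "m s t \<in> nucleus Q m" "ldiv Q m s t \<in> nucleus Q m" using nuc_mult nuc_ldiv by auto
next
  fix s y assume s: "s \<in> nucleus Q m" and y: "y \<in> Q"
  have sQ: "s \<in> Q" using nucQ s by auto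
  define \<phi> where "\<phi> = compose Q (restrict (inv_into Q (Ltr Q m y)) Q) (Rtr Q m y)"
  have inj: "inj_on (Ltr Q m y) Q"
    using bijL[OF y] unfolding bij_betw_def Ltr_def inj_on_def by auto
  have phi: "\<phi> z = ldiv Q m y (m z y)" if z: "z \<in> Q" for z
  proof -
    have "\<phi> z = inv_into Q (Ltr Q m y) (m z y)"
      unfolding \<phi>_def compose_def Rtr_def using z y by simp
    also have "\<dots> = ldiv Q m y (m z y)"
      by (rule inv_into_f_eq[OF inj]) (use ldiv_prop y z in \<open>auto simp: Ltr_def\<close>)
    finally show ?thesis .
  qed
  have "\<phi> \<in> Mlt Q m" unfolding \<phi>_def
    by (intro Mlt_comp Mlt_R Mlt_inv Mlt_L y)
  moreover have "\<phi> e = e" using phi[of e] y ldiv_unique[of y e y] by simp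
  ultimately have "\<phi> \<in> Inn Q m e" unfolding Inn_def by simp
  then have "\<phi> ` nucleus Q m = nucleus Q m" using N unfolding normal_subloop_def by blast
  then have "\<phi> s \<in> nucleus Q m" using s by blast
  moreover have "m y (\<phi> s) = m s y" using phi[OF sQ] ldiv_prop y sQ by simp
  ultimately show "\<exists>s'\<in>nucleus Q m. m s y = m y s'" by metis
qed auto

end

theorem lemma2:
  fixes Q :: "'a set" and m :: "'a \<Rightarrow> 'a \<Rightarrow> 'a" and e :: 'a
  assumes "loop Q m e"
  shows "(normal_subloop Q m e (nucleus Q m) \<longrightarrow>
           (comm_group (quot_loop Q m (nucleus Q m)) \<longleftrightarrow>
             (\<forall>x\<in>Q. \<forall>y\<in>Q. \<forall>z\<in>Q. \<forall>u\<in>Q. \<forall>v\<in>Q.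
                assoc Q m (assoc Q m x y z) u v = e
              \<and> assoc Q m u (assoc Q m x y z) v = e
              \<and> assoc Q m u v (assoc Q m x y z) = e
              \<and> assoc Q m (comm Q m x y) z u = e
              \<and> assoc Q m z (comm Q m x y) u = e
              \<and> assoc Q m z u (comm Q m x y) = e)))
       \<and> (group (quot_loop Q m (center Q m)) \<longleftrightarrow>
             (\<forall>x\<in>Q. \<forall>y\<in>Q. \<forall>z\<in>Q. \<forall>u\<in>Q. \<forall>v\<in>Q.
                assoc Q m (assoc Q m x y z) u v = e
              \<and> assoc Q m u (assoc Q m x y z) v = e
              \<and> assoc Q m u v (assoc Q m x y z) = e
              \<and> comm Q m (assoc Q m x y z) u = e))"
proof -
  interpret lp Q m e using assms by (rule lp.intro)
  have P1: "comm_group (quot_loop Q m (nucleus Q m)) \<longleftrightarrow>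
             (\<forall>x\<in>Q. \<forall>y\<in>Q. \<forall>z\<in>Q. \<forall>u\<in>Q. \<forall>v\<in>Q.
                assoc Q m (assoc Q m x y z) u v = e
              \<and> assoc Q m u (assoc Q m x y z) v = e
              \<and> assoc Q m u v (assoc Q m x y z) = e
              \<and> assoc Q m (comm Q m x y) z u = e
              \<and> assoc Q m z (comm Q m x y) u = e
              \<and> assoc Q m z u (comm Q m x y) = e)" (is "_ \<longleftrightarrow> ?R1")
    if N: "normal_subloop Q m e (nucleus Q m)"
  proof -
    interpret qc Q m e "nucleus Q m" using qc_nucleus[OF N] .
    have "comm_group (quot_loop Q m (nucleus Q m)) \<longleftrightarrow>
      (\<forall>x\<in>Q. \<forall>y\<in>Q. \<forall>z\<in>Q. assoc Q m x y z \<in> nucleus Q m) \<and>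
      (\<forall>x\<in>Q. \<forall>y\<in>Q. comm Q m x y \<in> nucleus Q m)"
      using comm_group_iff group_iff by simp
    also have "\<dots> \<longleftrightarrow> ?R1"
    proof
      assume H: "(\<forall>x\<in>Q. \<forall>y\<in>Q. \<forall>z\<in>Q. assoc Q m x y z \<in> nucleus Q m) \<and>
      (\<forall>x\<in>Q. \<forall>y\<in>Q. comm Q m x y \<in> nucleus Q m)"
      show "\<forall>x\<in>Q. \<forall>y\<in>Q. \<forall>z\<in>Q. \<forall>u\<in>Q. \<forall>v\<in>Q.
                assoc Q m (assoc Q m x y z) u v = e
              \<and> assoc Q m u (assoc Q m x y z) v = e
              \<and> assoc Q m u v (assoc Q m x y z) = e
              \<and> assoc Q m (comm Q m x y) z u = e
              \<and> assoc Q m z (comm Q m x y) u = e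
              \<and> assoc Q m z u (comm Q m x y) = e"
      proof (intro ballI)
        fix x y z u v assume q: "x \<in> Q" "y \<in> Q" "z \<in> Q" "u \<in> Q" "v \<in> Q"
        have a: "assoc Q m x y z \<in> nucleus Q m" and c: "comm Q m x y \<in> nucleus Q m" using H q by auto
        show "assoc Q m (assoc Q m x y z) u v = e
              \<and> assoc Q m u (assoc Q m x y z) v = e
              \<and> assoc Q m u v (assoc Q m x y z) = e
              \<and> assoc Q m (comm Q m x y) z u = e
              \<and> assoc Q m z (comm Q m x y) u = e
              \<and> assoc Q m z u (comm Q m x y) = e"
        proof -
          have A: "\<forall>u\<in>Q. \<forall>v\<in>Q. assoc Q m (assoc Q m x y z) u v = e \<and> assoc Q m u (assoc Q m x y z) v = e \<and> assoc Q m u v (assoc Q m x y z) = e"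
            using a nuc_iff[OF assoc_in[OF q(1-3)]] by simp
          have C: "\<forall>u\<in>Q. \<forall>v\<in>Q. assoc Q m (comm Q m x y) u v = e \<and> assoc Q m u (comm Q m x y) v = e \<and> assoc Q m u v (comm Q m x y) = e"
            using c nuc_iff[OF comm_in[OF q(1-2)]] by simp
          show ?thesis using A[rule_format, OF q(4) q(5)] C[rule_format, OF q(3) q(4)] by simp
        qed
      qed
    next
      assume H: "\<forall>x\<in>Q. \<forall>y\<in>Q. \<forall>z\<in>Q. \<forall>u\<in>Q. \<forall>v\<in>Q.
                assoc Q m (assoc Q m x y z) u v = e
              \<and> assoc Q m u (assoc Q m x y z) v = e
              \<and> assoc Q m u v (assoc Q m x y z) = e
              \<and> assoc Q m (comm Q m x y) z u = e
              \<and> assoc Q m z (comm Q m x y) u = e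
              \<and> assoc Q m z u (comm Q m x y) = e"
      show "(\<forall>x\<in>Q. \<forall>y\<in>Q. \<forall>z\<in>Q. assoc Q m x y z \<in> nucleus Q m) \<and>
      (\<forall>x\<in>Q. \<forall>y\<in>Q. comm Q m x y \<in> nucleus Q m)"
      proof (intro conjI ballI)
        fix x y z assume q: "x \<in> Q" "y \<in> Q" "z \<in> Q"
        show "assoc Q m x y z \<in> nucleus Q m"
          unfolding nuc_iff[OF assoc_in[OF q]]
        proof (intro ballI)
          fix u v assume uv: "u \<in> Q" "v \<in> Q"
          show "assoc Q m (assoc Q m x y z) u v = e \<and> assoc Q m u (assoc Q m x y z) v = e \<and> assoc Q m u v (assoc Q m x y z) = e"
            using H[rule_format, OF q uv] by simp
        qed
      next
        fix x y assume q: "x \<in> Q" "y \<in> Q"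
        show "comm Q m x y \<in> nucleus Q m"
          unfolding nuc_iff[OF comm_in[OF q]]
        proof (intro ballI)
          fix u v assume uv: "u \<in> Q" "v \<in> Q"
          show "assoc Q m (comm Q m x y) u v = e \<and> assoc Q m u (comm Q m x y) v = e \<and> assoc Q m u v (comm Q m x y) = e"
            using H[rule_format, OF q uv e_in] by simp
        qed
      qed
    qed
    finally show ?thesis .
  qed
  have P2: "group (quot_loop Q m (center Q m)) \<longleftrightarrow>
             (\<forall>x\<in>Q. \<forall>y\<in>Q. \<forall>z\<in>Q. \<forall>u\<in>Q. \<forall>v\<in>Q.
                assoc Q m (assoc Q m x y z) u v = e
              \<and> assoc Q m u (assoc Q m x y z) v = e
              \<and> assoc Q m u v (assoc Q m x y z) = e
              \<and> comm Q m (assoc Q m x y z) u = e)" (is "_ \<longleftrightarrow> ?R2")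
  proof -
    interpret qc Q m e "center Q m" using qc_center .
    have "group (quot_loop Q m (center Q m)) \<longleftrightarrow>
      (\<forall>x\<in>Q. \<forall>y\<in>Q. \<forall>z\<in>Q. assoc Q m x y z \<in> center Q m)"
      using group_iff by simp
    also have "\<dots> \<longleftrightarrow> ?R2"
    proof
      assume H: "\<forall>x\<in>Q. \<forall>y\<in>Q. \<forall>z\<in>Q. assoc Q m x y z \<in> center Q m"
      show "\<forall>x\<in>Q. \<forall>y\<in>Q. \<forall>z\<in>Q. \<forall>u\<in>Q. \<forall>v\<in>Q.
                assoc Q m (assoc Q m x y z) u v = e
              \<and> assoc Q m u (assoc Q m x y z) v = e
              \<and> assoc Q m u v (assoc Q m x y z) = e
              \<and> comm Q m (assoc Q m x y z) u = e"
      proof (intro ballI)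
        fix x y z u v assume q: "x \<in> Q" "y \<in> Q" "z \<in> Q" "u \<in> Q" "v \<in> Q"
        have a: "assoc Q m x y z \<in> center Q m" using H q by auto
        show "assoc Q m (assoc Q m x y z) u v = e
              \<and> assoc Q m u (assoc Q m x y z) v = e
              \<and> assoc Q m u v (assoc Q m x y z) = e
              \<and> comm Q m (assoc Q m x y z) u = e"
        proof -
          have A: "(\<forall>u\<in>Q. \<forall>v\<in>Q. assoc Q m (assoc Q m x y z) u v = e \<and> assoc Q m u (assoc Q m x y z) v = e \<and> assoc Q m u v (assoc Q m x y z) = e) \<and> (\<forall>u\<in>Q. comm Q m (assoc Q m x y z) u = e)"
            using a cen_iff[OF assoc_in[OF q(1-3)]] by simp
          show ?thesis using A q by simp
        qed
      qed
    next
      assume H: "\<forall>x\<in>Q. \<forall>y\<in>Q. \<forall>z\<in>Q. \<forall>u\<in>Q. \<forall>v\<in>Q.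
                assoc Q m (assoc Q m x y z) u v = e
              \<and> assoc Q m u (assoc Q m x y z) v = e
              \<and> assoc Q m u v (assoc Q m x y z) = e
              \<and> comm Q m (assoc Q m x y z) u = e"
      show "\<forall>x\<in>Q. \<forall>y\<in>Q. \<forall>z\<in>Q. assoc Q m x y z \<in> center Q m"
      proof (intro ballI)
        fix x y z assume q: "x \<in> Q" "y \<in> Q" "z \<in> Q"
        show "assoc Q m x y z \<in> center Q m"
          unfolding cen_iff[OF assoc_in[OF q]]
        proof (rule conjI; intro ballI)
          fix u v assume uv: "u \<in> Q" "v \<in> Q"
          show "assoc Q m (assoc Q m x y z) u v = e \<and> assoc Q m u (assoc Q m x y z) v = e \<and> assoc Q m u v (assoc Q m x y z) = e"
            using H[rule_format, OF q uv] by simp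
        next
          fix u assume u: "u \<in> Q"
          show "comm Q m (assoc Q m x y z) u = e" using H[rule_format, OF q u e_in] by simp
        qed
      qed
    qed
    finally show ?thesis .
  qed
  show ?thesis using P1 P2 by blast
qed

end
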